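(* Let $\phi:A\to B$ be a surjective ring homomorphism. If $A$ is a Prüfer ring and $\mathrm{Ker}(\phi)$ is a regular ideal of $A$, then $\mathfrak a(\mathfrak b\cap\mathfrak c)=\mathfrak a\mathfrak b\cap\mathfrak a\mathfrak c$ for all ideals $\mathfrak a,\mathfrak b,\mathfrak c$ of $B$. In particular, $B$ is a Prüfer ring.
   Context: All rings are commutative with identity. An ideal is regular if it contains a non-zerodivisor. A ring is a Prüfer ring if every regular finitely generated ideal is invertible. *)

theory Defs
  imports Main
begin

definition is_ideal :: "'a::comm_ring_1 set \<Rightarrow> bool" where
  "is_ideal I \<longleftrightarrow> 0 \<in> I \<and> (\<forall>x\<in>I. \<forall>y\<in>I. x + y \<in> I) \<and> (\<forall>r. \<forall>x\<in>I. r * x \<in> I)"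

definition ideal_gen :: "'a::comm_ring_1 set \<Rightarrow> 'a set" where
  "ideal_gen S = \<Inter>{K. is_ideal K \<and> S \<subseteq> K}"

definition ideal_mult :: "'a::comm_ring_1 set \<Rightarrow> 'a set \<Rightarrow> 'a set" where
  "ideal_mult I J = ideal_gen {a * b | a b. a \<in> I \<and> b \<in> J}"

definition nonzerodivisor :: "'a::comm_ring_1 \<Rightarrow> bool" where
  "nonzerodivisor x \<longleftrightarrow> (\<forall>y. x * y = 0 \<longrightarrow> y = 0)"

definition regular_ideal :: "'a::comm_ring_1 set \<Rightarrow> bool" where
  "regular_ideal I \<longleftrightarrow> is_ideal I \<and> (\<exists>x\<in>I. nonzerodivisor x)"

definition fin_gen_ideal :: "'a::comm_ring_1 set \<Rightarrow> bool" where
  "fin_gen_ideal I \<longleftrightarrow> (\<exists>S. finite S \<and> I = ideal_gen S)"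

(* I is invertible: there is a fractional ideal J' (an A-submodule of the total
   quotient ring with d J' \<subseteq> A for some non-zerodivisor d) with I J' = A.
   Writing J = d J' (an ordinary ideal of A) this says exactly I J = d A. *)
definition invertible_ideal :: "'a::comm_ring_1 set \<Rightarrow> bool" where
  "invertible_ideal I \<longleftrightarrow> is_ideal I \<and>
     (\<exists>J d. is_ideal J \<and> nonzerodivisor d \<and> ideal_mult I J = {d * r | r. True})"

definition prufer_ring :: "'a::comm_ring_1 itself \<Rightarrow> bool" where
  "prufer_ring _ \<longleftrightarrow>
     (\<forall>I::'a set. regular_ideal I \<and> fin_gen_ideal I \<longrightarrow> invertible_ideal I)"

definition ring_hom_fun :: "('a::comm_ring_1 \<Rightarrow> 'b::comm_ring_1) \<Rightarrow> bool" where
  "ring_hom_fun f \<longleftrightarrow> f 1 = 1 \<and> (\<forall>x y. f (x + y) = f x + f y) \<and> (\<forall>x y. f (x * y) = f x * f y)"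

end

theory Submission
  imports Defs
begin

inductive_set sums :: "'a::comm_ring_1 set \<Rightarrow> 'a set" for P where
  zero: "0 \<in> sums P"
| base: "x \<in> P \<Longrightarrow> x \<in> sums P"
| add: "x \<in> sums P \<Longrightarrow> y \<in> sums P \<Longrightarrow> x + y \<in> sums P"

definition prs :: "'a::comm_ring_1 set \<Rightarrow> 'a set \<Rightarrow> 'a set" where
  "prs I J = {a * b | a b. a \<in> I \<and> b \<in> J}"

lemma prsI: "a \<in> I \<Longrightarrow> b \<in> J \<Longrightarrow> a * b \<in> prs I J"
  unfolding prs_def by blast

lemma prs_mono: "I \<subseteq> I' \<Longrightarrow> J \<subseteq> J' \<Longrightarrow> prs I J \<subseteq> prs I' J'"
  unfolding prs_def by blast

lemma ideal_0: "is_ideal I \<Longrightarrow> 0 \<in> I" unfolding is_ideal_def by blast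
lemma ideal_add: "is_ideal I \<Longrightarrow> x \<in> I \<Longrightarrow> y \<in> I \<Longrightarrow> x + y \<in> I" unfolding is_ideal_def by blast
lemma ideal_ml: "is_ideal I \<Longrightarrow> x \<in> I \<Longrightarrow> r * x \<in> I" unfolding is_ideal_def by blast
lemma ideal_mr: "is_ideal I \<Longrightarrow> x \<in> I \<Longrightarrow> x * r \<in> I"
  using ideal_ml[of I x r] by (simp add: mult.commute)
lemma ideal_diff: "is_ideal I \<Longrightarrow> x \<in> I \<Longrightarrow> y \<in> I \<Longrightarrow> x - y \<in> I"
  using ideal_add[of I x "(-1) * y"] ideal_ml[of I y "-1"] by simp

lemma sums_sub: "is_ideal K \<Longrightarrow> P \<subseteq> K \<Longrightarrow> sums P \<subseteq> K"
proof
  fix x assume K: "is_ideal K" and P: "P \<subseteq> K" and x: "x \<in> sums P"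
  from x show "x \<in> K" by induction (use K P in \<open>auto intro: ideal_0 ideal_add\<close>)
qed

lemma sums_mono: "P \<subseteq> Q \<Longrightarrow> sums P \<subseteq> sums Q"
proof
  fix x assume PQ: "P \<subseteq> Q" and x: "x \<in> sums P"
  from x show "x \<in> sums Q" by induction (use PQ in \<open>auto intro: sums.intros\<close>)
qed

lemma sums_ideal: assumes "is_ideal I" shows "is_ideal (sums (prs I J))"
proof -
  have "r * x \<in> sums (prs I J)" if "x \<in> sums (prs I J)" for r x
    using that
  proof (induction rule: sums.induct)
    case zero then show ?case by (simp add: sums.zero)
  next
    case (base x)
    then obtain a b where "x = a * b" "a \<in> I" "b \<in> J" unfolding prs_def by blast
    then have "r * x = (r * a) * b" by (simp add: mult.assoc)
    moreover have "r * a \<in> I" using `a \<in> I` assms ideal_ml by blast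
    ultimately show ?case using `b \<in> J` by (metis prsI sums.base)
  next
    case (add x y) then show ?case by (simp add: distrib_left sums.add)
  qed
  then show ?thesis unfolding is_ideal_def by (auto intro: sums.intros)
qed

lemma ideal_gen_ideal: "is_ideal (ideal_gen S)"
  unfolding ideal_gen_def is_ideal_def by auto

lemma ideal_gen_sub: "S \<subseteq> ideal_gen S"
  unfolding ideal_gen_def by auto

lemma ideal_gen_least: "is_ideal K \<Longrightarrow> S \<subseteq> K \<Longrightarrow> ideal_gen S \<subseteq> K"
  unfolding ideal_gen_def by auto

lemma ideal_mult_eq: assumes "is_ideal I" shows "ideal_mult I J = sums (prs I J)"
proof
  show "ideal_mult I J \<subseteq> sums (prs I J)"
    unfolding ideal_mult_def
    by (rule ideal_gen_least[OF sums_ideal[OF assms]]) (auto simp: prs_def intro: sums.base)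
  show "sums (prs I J) \<subseteq> ideal_mult I J"
    unfolding ideal_mult_def
    by (rule sums_sub[OF ideal_gen_ideal]) (use ideal_gen_sub[of "{a * b |a b. a \<in> I \<and> b \<in> J}"] in \<open>auto simp: prs_def\<close>)
qed

lemma nzd_cancel: "nonzerodivisor d \<Longrightarrow> d * x = d * y \<Longrightarrow> x = y"
  unfolding nonzerodivisor_def by (metis eq_iff_diff_eq_0 right_diff_distrib)

lemma prufer_inv:
  fixes t :: "'a::comm_ring_1"
  assumes "prufer_ring TYPE('a)" "finite S" "nonzerodivisor t" "t \<in> S"
  obtains M d where "is_ideal M" "nonzerodivisor d"
    "sums (prs (ideal_gen S) M) = {d * r | r. True}"
proof -
  have "regular_ideal (ideal_gen S)"
    unfolding regular_ideal_def using ideal_gen_ideal ideal_gen_sub assms by blast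
  moreover have "fin_gen_ideal (ideal_gen S)" unfolding fin_gen_ideal_def using assms by blast
  ultimately have "invertible_ideal (ideal_gen S)"
    using assms(1) unfolding prufer_ring_def by blast
  then show ?thesis unfolding invertible_ideal_def
    using ideal_mult_eq[OF ideal_gen_ideal] that by metis
qed

lemma in_dA: "sums P = {d * r | r. True} \<Longrightarrow> x \<in> P \<Longrightarrow> \<exists>r. x = d * r"
  using sums.base by blast

lemma d_in: "sums P = {d * r | r. True} \<Longrightarrow> d \<in> sums P"
  by (metis (mono_tags, lifting) mem_Collect_eq mult.right_neutral)

lemma distrib_lemma:
  fixes t :: "'a::comm_ring_1"
  assumes P: "prufer_ring TYPE('a)" and X: "is_ideal X" and Y: "is_ideal Y" and Z: "is_ideal Z"
    and t: "nonzerodivisor t" "t \<in> Z" and j: "j \<in> Y" and l: "l \<in> Z" and x: "j + l \<in> X"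
  shows "\<exists>w1 w2. w1 \<in> X \<inter> Y \<and> w2 \<in> X \<inter> Z \<and> j + l = w1 + w2"
proof -
  obtain M d where M: "is_ideal M" and d: "nonzerodivisor d"
    and eq: "sums (prs (ideal_gen {j,l,t}) M) = {d * r | r. True}"
    using prufer_inv[OF P, of "{j,l,t}" t] t by auto
  define W where "W = {w1 + w2 | w1 w2. w1 \<in> X \<inter> Y \<and> w2 \<in> X \<inter> Z}"
  define xx where "xx = j + l"
  have Wadd: "a + b \<in> W" if ha: "a \<in> W" and hb: "b \<in> W" for a b
  proof -
    obtain a1 a2 where "a = a1 + a2" "a1 \<in> X \<inter> Y" "a2 \<in> X \<inter> Z" using ha unfolding W_def by blast
    moreover obtain b1 b2 where "b = b1 + b2"
      "b1 \<in> X \<inter> Y" "b2 \<in> X \<inter> Z" using hb unfolding W_def by blast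
    ultimately have "a + b = (a1+b1) + (a2+b2)" "a1 + b1 \<in> X \<inter> Y" "a2 + b2 \<in> X \<inter> Z"
      using X Y Z ideal_add by (auto simp: algebra_simps)
    then show ?thesis unfolding W_def by blast
  qed
  have W0: "0 \<in> W"
  proof -
    have "(0::'a) \<in> X \<inter> Y" "(0::'a) \<in> X \<inter> Z" using X Y Z ideal_0 by auto
    then have "0 + 0 \<in> W" unfolding W_def by blast
    then show ?thesis by simp
  qed
  have G: "ideal_gen {j,l,t} \<subseteq> {r1*j + r2*l + r3*t | r1 r2 r3. True}"
  proof (rule ideal_gen_least)
    show "is_ideal {r1*j + r2*l + r3*t | r1 r2 r3. True}"
      unfolding is_ideal_def
    proof (intro conjI ballI allI)
      have "(0::'a) = 0*j + 0*l + 0*t" by simp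
      then show "0 \<in> {r1*j + r2*l + r3*t | r1 r2 r3. True}" by blast
    next
      fix a b assume "a \<in> {r1*j + r2*l + r3*t | r1 r2 r3. True}" "b \<in> {r1*j + r2*l + r3*t | r1 r2 r3. True}"
      then obtain a1 a2 a3 b1 b2 b3 where "a = a1*j+a2*l+a3*t" "b = b1*j+b2*l+b3*t" by blast
      then have "a + b = (a1+b1)*j + (a2+b2)*l + (a3+b3)*t" by (simp add: algebra_simps)
      then show "a + b \<in> {r1*j + r2*l + r3*t | r1 r2 r3. True}" by blast
    next
      fix r a assume "a \<in> {r1*j + r2*l + r3*t | r1 r2 r3. True}"
      then obtain a1 a2 a3 where "a = a1*j+a2*l+a3*t" by blast
      then have "r * a = (r*a1)*j + (r*a2)*l + (r*a3)*t" by (simp add: algebra_simps)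
      then show "r * a \<in> {r1*j + r2*l + r3*t | r1 r2 r3. True}" by blast
    qed
    have "j = 1*j + 0*l + 0*t" "l = 0*j + 1*l + 0*t" "t = 0*j + 0*l + 1*t" by simp_all
    then show "{j, l, t} \<subseteq> {r1*j + r2*l + r3*t | r1 r2 r3. True}" by blast
  qed
  have gens: "{j,l,t} \<subseteq> ideal_gen {j,l,t}" by (rule ideal_gen_sub)
  have key: "m * n * xx \<in> {d * w | w. w \<in> W}" if m: "m \<in> ideal_gen {j,l,t}" and n: "n \<in> M" for m n
  proof -
    obtain r1 r2 r3 where mr: "m = r1*j + r2*l + r3*t" using G m by blast
    obtain \<beta> where b: "j * n = d * \<beta>" using in_dA[OF eq prsI[OF _ n, of j]] gens by auto
    obtain \<alpha> where a: "l * n = d * \<alpha>" using in_dA[OF eq prsI[OF _ n, of l]] gens by auto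
    obtain \<delta> where dl: "t * n = d * \<delta>" using in_dA[OF eq prsI[OF _ n, of t]] gens by auto
    have nx: "n * xx = d * (\<alpha> + \<beta>)" unfolding xx_def using a b by (simp add: algebra_simps)
    have xX: "xx \<in> X" using x xx_def by simp
    have e1: "\<beta> * xx = (\<alpha> + \<beta>) * j"
      by (rule nzd_cancel[OF d]) (metis b nx mult.assoc mult.commute)
    have e2: "\<alpha> * xx = (\<alpha> + \<beta>) * l"
      by (rule nzd_cancel[OF d]) (metis a nx mult.assoc mult.commute)
    have e3: "\<delta> * xx = (\<alpha> + \<beta>) * t"
      by (rule nzd_cancel[OF d]) (metis dl nx mult.assoc mult.commute)
    have m1: "\<beta> * xx \<in> X \<inter> Y" using ideal_ml[OF X xX, of \<beta>] ideal_ml[OF Y j, of "\<alpha> + \<beta>"] e1 by simp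
    have m2: "\<alpha> * xx \<in> X \<inter> Z" using ideal_ml[OF X xX, of \<alpha>] ideal_ml[OF Z l, of "\<alpha> + \<beta>"] e2 by simp
    have m3: "\<delta> * xx \<in> X \<inter> Z" using ideal_ml[OF X xX, of \<delta>] ideal_ml[OF Z t(2), of "\<alpha> + \<beta>"] e3 by simp
    have "m * n * xx = d * (r1 * (\<beta> * xx) + (r2 * (\<alpha> * xx) + r3 * (\<delta> * xx)))"
    proof -
      have "m * n * xx = r1 * ((j * n) * xx) + r2 * ((l*n)*xx) + r3 * ((t*n)*xx)"
        unfolding mr by (simp add: algebra_simps)
      also have "\<dots> = d * (r1 * (\<beta> * xx) + (r2 * (\<alpha> * xx) + r3 * (\<delta> * xx)))"
        unfolding a b dl by (simp add: algebra_simps)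
      finally show ?thesis .
    qed
    moreover have "r1 * (\<beta> * xx) + (r2 * (\<alpha> * xx) + r3 * (\<delta> * xx)) \<in> W"
    proof -
      have "r1 * (\<beta> * xx) \<in> X \<inter> Y" using m1 ideal_ml X Y by blast
      moreover have "r2 * (\<alpha> * xx) + r3 * (\<delta> * xx) \<in> X \<inter> Z"
        using m2 m3 ideal_ml ideal_add X Z by (meson IntD1 IntD2 IntI)
      ultimately show ?thesis unfolding W_def by blast
    qed
    ultimately show ?thesis by blast
  qed
  have "z * xx \<in> {d * w | w. w \<in> W}" if "z \<in> sums (prs (ideal_gen {j,l,t}) M)" for z
    using that
  proof (induction rule: sums.induct)
    case zero then show ?case using W0 by (auto intro!: exI[of _ 0])
  next
    case (base z) then show ?case using key unfolding prs_def by blast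
  next
    case (add a b)
    then obtain wa wb where "a * xx = d * wa" "wa \<in> W" "b * xx = d * wb" "wb \<in> W" by blast
    then show ?case using Wadd by (auto intro!: exI[of _ "wa + wb"] simp: algebra_simps)
  qed
  from this[OF d_in[OF eq]] obtain w where "d * xx = d * w" "w \<in> W" by blast
  then have "xx \<in> W" using nzd_cancel[OF d] by metis
  then show ?thesis unfolding W_def xx_def by blast
qed

lemma sums_fin: "u \<in> sums (prs I J) \<Longrightarrow> \<exists>S. finite S \<and> S \<subseteq> I \<and> u \<in> sums (prs S J)"
proof (induction rule: sums.induct)
  case zero then show ?case by (auto intro: sums.zero)
next
  case (base x)
  then obtain a b where "x = a * b" "a \<in> I" "b \<in> J" unfolding prs_def by blast
  then show ?case by (auto intro!: exI[of _ "{a}"] sums.base prsI)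
next
  case (add x y)
  then obtain S1 S2 where "finite S1" "S1 \<subseteq> I" "x \<in> sums (prs S1 J)"
    "finite S2" "S2 \<subseteq> I" "y \<in> sums (prs S2 J)" by blast
  moreover have "sums (prs S1 J) \<subseteq> sums (prs (S1 \<union> S2) J)" "sums (prs S2 J) \<subseteq> sums (prs (S1 \<union> S2) J)"
    by (intro sums_mono prs_mono; simp)+
  ultimately show ?case by (auto intro!: exI[of _ "S1 \<union> S2"] sums.add)
qed

lemma cancel_lemma:
  fixes t :: "'a::comm_ring_1"
  assumes P: "prufer_ring TYPE('a)" and S: "finite S" and t: "nonzerodivisor t" "t \<in> S"
    and J: "is_ideal J" and L: "is_ideal L"
    and uJ: "u \<in> sums (prs S J)" and uL: "u \<in> sums (prs S L)"
  shows "u \<in> sums (prs (ideal_gen S) (J \<inter> L))"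
proof -
  obtain M d where M: "is_ideal M" and d: "nonzerodivisor d"
    and eq: "sums (prs (ideal_gen S) M) = {d * r | r. True}"
    using prufer_inv[OF P S t] by auto
  have c1: "\<exists>w\<in>J'. m * z = d * w" if hz: "z \<in> sums (prs S J')" and hm: "m \<in> M" and hJ: "is_ideal J'" for z m J'
    using hz
  proof (induction rule: sums.induct)
    case zero have "m * 0 = d * 0" by simp
    then show ?case using hJ ideal_0 by blast
  next
    case (base z)
    then obtain p q where "z = p * q" "p \<in> S" "q \<in> J'" unfolding prs_def by blast
    moreover obtain r where "p * m = d * r"
      using in_dA[OF eq prsI[OF _ hm, of p]] ideal_gen_sub `p \<in> S` by blast
    ultimately have "m * z = d * (r * q)" "r * q \<in> J'"
      using hJ ideal_ml by (metis mult.assoc mult.commute, blast)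
    then show ?case by blast
  next
    case (add a b)
    then obtain wa wb where "wa \<in> J'" "m * a = d * wa" "wb \<in> J'" "m * b = d * wb" by blast
    then have "m * (a + b) = d * (wa + wb)" "wa + wb \<in> J'" using hJ ideal_add by (auto simp: algebra_simps)
    then show ?case by blast
  qed
  have c1': "\<exists>w\<in>J \<inter> L. m * u = d * w" if hm: "m \<in> M" for m
  proof -
    obtain w1 w2 where "w1 \<in> J" "m * u = d * w1" "w2 \<in> L" "m * u = d * w2"
      using c1[OF uJ hm J] c1[OF uL hm L] by blast
    then show ?thesis using nzd_cancel[OF d, of w1 w2] by auto
  qed
  have c2: "\<exists>w\<in>sums (prs (ideal_gen S) (J \<inter> L)). z * u = d * w" if "z \<in> sums (prs (ideal_gen S) M)" for z
    using that
  proof (induction rule: sums.induct)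
    case zero have "0 * u = d * 0" by simp
    then show ?case using sums.zero by blast
  next
    case (base z)
    then obtain p m where pm: "z = p * m" "p \<in> ideal_gen S" "m \<in> M" unfolding prs_def by blast
    then obtain w where w: "w \<in> J \<inter> L" "m * u = d * w" using c1' by blast
    have "z * u = d * (p * w)" using pm(1) w(2) by (metis mult.assoc mult.left_commute)
    moreover have "p * w \<in> sums (prs (ideal_gen S) (J \<inter> L))" using pm(2) w(1) by (intro sums.base prsI)
    ultimately show ?case by blast
  next
    case (add a b)
    then obtain wa wb where "wa \<in> sums (prs (ideal_gen S) (J \<inter> L))" "a * u = d * wa"
      "wb \<in> sums (prs (ideal_gen S) (J \<inter> L))" "b * u = d * wb" by blast
    then have "(a + b) * u = d * (wa + wb)" "wa + wb \<in> sums (prs (ideal_gen S) (J \<inter> L))"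
      by (auto simp: algebra_simps intro: sums.add)
    then show ?case by blast
  qed
  from c2[OF d_in[OF eq]] obtain w where "w \<in> sums (prs (ideal_gen S) (J \<inter> L))" "d * u = d * w" by blast
  then show ?thesis using nzd_cancel[OF d] by metis
qed

lemma cancel_gen:
  fixes t :: "'a::comm_ring_1"
  assumes P: "prufer_ring TYPE('a)" and t: "nonzerodivisor t" "t \<in> I" and I: "is_ideal I"
    and J: "is_ideal J" and L: "is_ideal L"
    and uJ: "u \<in> sums (prs I J)" and uL: "u \<in> sums (prs I L)"
  shows "u \<in> sums (prs I (J \<inter> L))"
proof -
  obtain S1 where S1: "finite S1" "S1 \<subseteq> I" "u \<in> sums (prs S1 J)" using sums_fin[OF uJ] by blast
  obtain S2 where S2: "finite S2" "S2 \<subseteq> I" "u \<in> sums (prs S2 L)" using sums_fin[OF uL] by blast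
  let ?S = "insert t (S1 \<union> S2)"
  have sub1: "S1 \<subseteq> ?S" and sub2: "S2 \<subseteq> ?S" by auto
  have fin: "finite ?S" using S1(1) S2(1) by simp
  have a1: "u \<in> sums (prs ?S J)"
    using subsetD[OF sums_mono[OF prs_mono[OF sub1 order_refl]] S1(3)] .
  have a2: "u \<in> sums (prs ?S L)"
    using subsetD[OF sums_mono[OF prs_mono[OF sub2 order_refl]] S2(3)] .
  have a3: "u \<in> sums (prs (ideal_gen ?S) (J \<inter> L))"
    by (rule cancel_lemma[OF P fin t(1) insertI1 J L a1 a2])
  have "?S \<subseteq> I" using S1(2) S2(2) t(2) by auto
  then have "ideal_gen ?S \<subseteq> I" by (rule ideal_gen_least[OF I])
  then show ?thesis using subsetD[OF sums_mono[OF prs_mono[OF _ order_refl]] a3] by blast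
qed

lemma core:
  fixes t :: "'a::comm_ring_1"
  assumes P: "prufer_ring TYPE('a)" and t: "nonzerodivisor t" "t \<in> I" "t \<in> K"
    and K: "is_ideal K" and I: "is_ideal I" and J: "is_ideal J" and L: "is_ideal L"
    and u: "u \<in> sums (prs I J)" and v: "v \<in> sums (prs I L)" and uv: "u - v \<in> K"
  shows "\<exists>w\<in>sums (prs I (J \<inter> L)). u - w \<in> K"
proof -
  have "v + (u - v) \<in> sums (prs I J)" using u by simp
  from distrib_lemma[OF P sums_ideal[OF I] sums_ideal[OF I] K t(1) t(3) v uv this]
  obtain w1 w2 where w: "w1 \<in> sums (prs I J) \<inter> sums (prs I L)" "w2 \<in> sums (prs I J) \<inter> K"
    "v + (u - v) = w1 + w2" by blast
  have "w1 \<in> sums (prs I (J \<inter> L))" using cancel_gen[OF P t(1,2) I J L] w by blast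
  moreover have "u - w1 = w2" using w(3) by (simp add: algebra_simps)
  ultimately show ?thesis using w by blast
qed

lemma hom_add: "ring_hom_fun f \<Longrightarrow> f (x + y) = f x + f y" unfolding ring_hom_fun_def by blast
lemma hom_mult: "ring_hom_fun f \<Longrightarrow> f (x * y) = f x * f y" unfolding ring_hom_fun_def by blast

lemma hom0: assumes "ring_hom_fun f" shows "f 0 = 0"
proof -
  have "f (0 + 0) = f 0 + f 0" by (rule hom_add[OF assms])
  then show ?thesis by simp
qed

lemma hom_diff: assumes "ring_hom_fun f" shows "f (x - y) = f x - f y"
proof -
  have "f ((x - y) + y) = f (x - y) + f y" by (rule hom_add[OF assms])
  then show ?thesis by (simp add: eq_diff_eq)
qed

lemma preimage_ideal: assumes h: "ring_hom_fun f" and a: "is_ideal a" shows "is_ideal {x. f x \<in> a}"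
  unfolding is_ideal_def
proof (intro conjI ballI allI)
  show "0 \<in> {x. f x \<in> a}" using hom0[OF h] ideal_0[OF a] by simp
next
  fix x y assume "x \<in> {x. f x \<in> a}" "y \<in> {x. f x \<in> a}"
  then show "x + y \<in> {x. f x \<in> a}" using hom_add[OF h] ideal_add[OF a] by simp
next
  fix r x assume "x \<in> {x. f x \<in> a}"
  then show "r * x \<in> {x. f x \<in> a}" using hom_mult[OF h] ideal_ml[OF a] by simp
qed

lemma lift_sums:
  assumes h: "ring_hom_fun f" and s: "surj f" and y: "y \<in> sums (prs a b)"
  shows "\<exists>u\<in>sums (prs {x. f x \<in> a} {x. f x \<in> b}). f u = y"
  using y
proof (induction rule: sums.induct)
  case zero then show ?case using hom0[OF h] sums.zero by blast
next
  case (base y)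
  then obtain a0 b0 where "y = a0 * b0" "a0 \<in> a" "b0 \<in> b" unfolding prs_def by blast
  moreover obtain p where "a0 = f p" using surjD[OF s, of a0] by (elim exE)
  moreover obtain q where "b0 = f q" using surjD[OF s, of b0] by (elim exE)
  ultimately have "p * q \<in> prs {x. f x \<in> a} {x. f x \<in> b}" "f (p * q) = y"
    using hom_mult[OF h] by (auto intro: prsI)
  then show ?case using sums.base by blast
next
  case (add x y)
  then obtain u1 u2 where "u1 \<in> sums (prs {x. f x \<in> a} {x. f x \<in> b})" "f u1 = x"
    "u2 \<in> sums (prs {x. f x \<in> a} {x. f x \<in> b})" "f u2 = y" by blast
  then have "u1 + u2 \<in> sums (prs {x. f x \<in> a} {x. f x \<in> b})" "f (u1 + u2) = x + y"
    using hom_add[OF h] sums.add by auto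
  then show ?case by blast
qed

lemma push_sums:
  assumes h: "ring_hom_fun f" and u: "u \<in> sums (prs I J)" and "f ` I \<subseteq> a" "f ` J \<subseteq> b"
  shows "f u \<in> sums (prs a b)"
  using u
proof (induction rule: sums.induct)
  case zero then show ?case using hom0[OF h] sums.zero by simp
next
  case (base x)
  then obtain p q where "x = p * q" "p \<in> I" "q \<in> J" unfolding prs_def by blast
  then have "f x \<in> prs a b" using assms(3,4) hom_mult[OF h] by (auto intro: prsI)
  then show ?case by (rule sums.base)
next
  case (add x y) then show ?case using hom_add[OF h] sums.add by simp
qed

theorem proposition4p4:
  fixes \<phi> :: "'a::comm_ring_1 \<Rightarrow> 'b::comm_ring_1"
  assumes "ring_hom_fun \<phi>" and "surj \<phi>"
    and "prufer_ring TYPE('a)"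
    and "regular_ideal {x. \<phi> x = 0}"
  shows "(\<forall>\<aa> \<bb> \<cc> :: 'b set. is_ideal \<aa> \<and> is_ideal \<bb> \<and> is_ideal \<cc> \<longrightarrow>
            ideal_mult \<aa> (\<bb> \<inter> \<cc>) = ideal_mult \<aa> \<bb> \<inter> ideal_mult \<aa> \<cc>)
         \<and> prufer_ring TYPE('b)"
proof -
  note h = assms(1) and s = assms(2) and P = assms(3)
  let ?K = "{x. \<phi> x = 0}"
  obtain t where t: "t \<in> ?K" "nonzerodivisor t" using assms(4) unfolding regular_ideal_def by blast
  have Ki: "is_ideal ?K" using assms(4) unfolding regular_ideal_def by blast
  have part1: "ideal_mult a (b \<inter> c) = ideal_mult a b \<inter> ideal_mult a c"
    if a: "is_ideal a" and b: "is_ideal b" and c: "is_ideal c" for a b c :: "'b set"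
  proof
    show "ideal_mult a (b \<inter> c) \<subseteq> ideal_mult a b \<inter> ideal_mult a c"
      unfolding ideal_mult_eq[OF a]
      using sums_mono[OF prs_mono[OF order_refl, of "b \<inter> c" b a]]
            sums_mono[OF prs_mono[OF order_refl, of "b \<inter> c" c a]] by blast
  next
    show "ideal_mult a b \<inter> ideal_mult a c \<subseteq> ideal_mult a (b \<inter> c)"
    proof
      fix y assume "y \<in> ideal_mult a b \<inter> ideal_mult a c"
      then have yb: "y \<in> sums (prs a b)" and yc: "y \<in> sums (prs a c)"
        unfolding ideal_mult_eq[OF a] by auto
      let ?I = "{x. \<phi> x \<in> a}" and ?J = "{x. \<phi> x \<in> b}" and ?L = "{x. \<phi> x \<in> c}"
      obtain u where u: "u \<in> sums (prs ?I ?J)" "\<phi> u = y" using lift_sums[OF h s yb] by blast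
      obtain v where v: "v \<in> sums (prs ?I ?L)" "\<phi> v = y" using lift_sums[OF h s yc] by blast
      have uv: "u - v \<in> ?K" using u v hom_diff[OF h] by simp
      have tI: "t \<in> ?I" using t ideal_0[OF a] by simp
      obtain w where w: "w \<in> sums (prs ?I (?J \<inter> ?L))" "u - w \<in> ?K"
        using core[OF P t(2) tI t(1) Ki preimage_ideal[OF h a] preimage_ideal[OF h b]
            preimage_ideal[OF h c] u(1) v(1) uv] by blast
      have "\<phi> w = y" using w(2) u(2) hom_diff[OF h] by simp
      moreover have "\<phi> w \<in> sums (prs a (b \<inter> c))" by (rule push_sums[OF h w(1)]; blast)
      ultimately show "y \<in> ideal_mult a (b \<inter> c)" unfolding ideal_mult_eq[OF a] by simp
    qed
  qed
  have part2: "invertible_ideal a0" if reg: "regular_ideal a0" and fg: "fin_gen_ideal a0" for a0 :: "'b set"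
  proof -
    obtain s0 where s0: "s0 \<in> a0" "nonzerodivisor s0" using reg unfolding regular_ideal_def by blast
    obtain T where T: "finite T" "a0 = ideal_gen T" using fg unfolding fin_gen_ideal_def by blast
    have a0i: "is_ideal a0" unfolding T(2) by (rule ideal_gen_ideal)
    define S' where "S' = (\<lambda>b. SOME x. \<phi> x = b) ` T"
    have phS: "\<phi> (SOME x. \<phi> x = b) = b" for b
    proof -
      obtain x where "b = \<phi> x" using surjD[OF s, of b] by (elim exE)
      then have "\<phi> x = b" by (rule sym)
      then show ?thesis by (rule someI[of "\<lambda>x. \<phi> x = b"])
    qed
    have S'T: "\<phi> ` S' = T" unfolding S'_def image_image phS by (rule image_ident)
    define I' where "I' = ideal_gen (insert t S')"
    have fin: "finite (insert t S')" using T(1) unfolding S'_def by simp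
    have I'i: "is_ideal I'" unfolding I'_def by (rule ideal_gen_ideal)
    have sub1: "\<phi> ` I' \<subseteq> a0"
    proof -
      have Ta0: "T \<subseteq> a0" unfolding T(2) by (rule ideal_gen_sub)
      have "insert t S' \<subseteq> {x. \<phi> x \<in> a0}"
      proof (rule subsetI)
        fix x assume "x \<in> insert t S'"
        then consider "x = t" | "x \<in> S'" by blast
        then show "x \<in> {x. \<phi> x \<in> a0}"
        proof cases
          case 1 then show ?thesis using t(1) ideal_0[OF a0i] by simp
        next
          case 2 then have "\<phi> x \<in> T" using S'T by blast
          then show ?thesis using Ta0 by blast
        qed
      qed
      then have "I' \<subseteq> {x. \<phi> x \<in> a0}" unfolding I'_def
        by (rule ideal_gen_least[OF preimage_ideal[OF h a0i]])
      then show ?thesis by blast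
    qed
    have sub2: "a0 \<subseteq> \<phi> ` I'"
    proof -
      have "is_ideal (\<phi> ` I')" unfolding is_ideal_def
      proof (intro conjI ballI allI)
        show "0 \<in> \<phi> ` I'" using image_eqI[of 0 \<phi> 0 I', OF hom0[OF h, symmetric] ideal_0[OF I'i]] .
      next
        fix x y assume "x \<in> \<phi> ` I'" "y \<in> \<phi> ` I'"
        then obtain x' y' where "x' \<in> I'" "y' \<in> I'" "x = \<phi> x'" "y = \<phi> y'" by blast
        then have "x + y = \<phi> (x' + y')" "x' + y' \<in> I'" using hom_add[OF h] ideal_add[OF I'i] by auto
        then show "x + y \<in> \<phi> ` I'" by blast
      next
        fix r x assume "x \<in> \<phi> ` I'"
        then obtain x' where "x' \<in> I'" "x = \<phi> x'" by blast
        moreover obtain r' where "r = \<phi> r'" using surjD[OF s, of r] by (elim exE)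
        ultimately have "r * x = \<phi> (r' * x')" "r' * x' \<in> I'" using hom_mult[OF h] ideal_ml[OF I'i] by auto
        then show "r * x \<in> \<phi> ` I'" by blast
      qed
      moreover have "T \<subseteq> \<phi> ` I'"
      proof -
        have "S' \<subseteq> I'" using ideal_gen_sub[of "insert t S'"] unfolding I'_def by blast
        then have "\<phi> ` S' \<subseteq> \<phi> ` I'" by (rule image_mono)
        then show ?thesis using S'T by simp
      qed
      ultimately show ?thesis unfolding T(2) by (rule ideal_gen_least)
    qed
    obtain s' where s'0: "s0 = \<phi> s'" "s' \<in> I'" using subsetD[OF sub2 s0(1)] by (rule imageE)
    have s': "s' \<in> I'" "\<phi> s' = s0" using s'0 by simp_all
    obtain M d where M: "is_ideal M" and d: "nonzerodivisor d"
      and eq: "sums (prs I' M) = {d * r | r. True}"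
      using prufer_inv[OF P fin t(2)] unfolding I'_def by auto
    define Q where "Q = {\<beta>. \<forall>q\<in>I'. \<exists>\<gamma>. \<beta> * q = s' * \<gamma>}"
    have cl: "\<exists>w\<in>sums (prs I' Q). d * w = z * s'" if "z \<in> sums (prs I' M)" for z
      using that
    proof (induction rule: sums.induct)
      case zero have "d * 0 = 0 * s'" by simp
      then show ?case using sums.zero by blast
    next
      case (base z)
      then obtain p m where pm: "z = p * m" "p \<in> I'" "m \<in> M" unfolding prs_def by blast
      obtain \<beta> where \<beta>: "s' * m = d * \<beta>" using in_dA[OF eq prsI[OF s'(1) pm(3)]] by blast
      have "\<beta> \<in> Q" unfolding Q_def
      proof (intro CollectI ballI)
        fix q assume "q \<in> I'"
        obtain \<gamma> where "q * m = d * \<gamma>" using in_dA[OF eq prsI[OF `q \<in> I'` pm(3)]] by blast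
        have "d * (\<beta> * q) = d * (s' * \<gamma>)"
          by (metis \<beta> `q * m = d * \<gamma>` mult.assoc mult.commute)
        then show "\<exists>\<gamma>. \<beta> * q = s' * \<gamma>" using nzd_cancel[OF d] by blast
      qed
      then have "p * \<beta> \<in> sums (prs I' Q)" using pm(2) by (intro sums.base prsI)
      moreover have "d * (p * \<beta>) = z * s'" using pm(1) \<beta> by (metis mult.assoc mult.commute)
      ultimately show ?case by blast
    next
      case (add a b)
      then obtain wa wb where "wa \<in> sums (prs I' Q)" "d * wa = a * s'"
        "wb \<in> sums (prs I' Q)" "d * wb = b * s'" by blast
      then have "wa + wb \<in> sums (prs I' Q)" "d * (wa + wb) = (a + b) * s'"
        by (auto intro: sums.add simp: distrib_left distrib_right)
      then show ?case by blast
    qed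
    from cl[OF d_in[OF eq]] obtain w where w: "w \<in> sums (prs I' Q)" "d * w = d * s'" by blast
    have ws: "w = s'" using nzd_cancel[OF d w(2)] .
    define N where "N = {y. \<forall>z\<in>a0. \<exists>r. y * z = s0 * r}"
    have Ni: "is_ideal N" unfolding is_ideal_def N_def
    proof (intro conjI ballI allI; clarsimp)
      show "\<And>z. z \<in> a0 \<Longrightarrow> \<exists>r. s0 * r = 0" using mult_zero_right by blast
    next
      fix x y z assume "\<forall>z\<in>a0. \<exists>r. x * z = s0 * r" "\<forall>z\<in>a0. \<exists>r. y * z = s0 * r" "z \<in> a0"
      then obtain r1 r2 where "x * z = s0 * r1" "y * z = s0 * r2" by blast
      then have "(x + y) * z = s0 * (r1 + r2)" by (simp add: algebra_simps)
      then show "\<exists>r. (x + y) * z = s0 * r" by blast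
    next
      fix r x z assume "\<forall>z\<in>a0. \<exists>r. x * z = s0 * r" "z \<in> a0"
      then obtain r1 where "x * z = s0 * r1" by blast
      then have "r * x * z = s0 * (r * r1)" by (simp add: algebra_simps)
      then show "\<exists>ra. r * x * z = s0 * ra" by blast
    qed
    have sI: "is_ideal {s0 * r | r. True}" unfolding is_ideal_def
    proof (intro conjI ballI allI)
      have "(0::'b) = s0 * 0" by simp
      then show "0 \<in> {s0 * r | r. True}" by blast
    next
      fix x y assume "x \<in> {s0 * r | r. True}" "y \<in> {s0 * r | r. True}"
      then obtain r1 r2 where "x = s0 * r1" "y = s0 * r2" by blast
      then have "x + y = s0 * (r1 + r2)" by (simp add: algebra_simps)
      then show "x + y \<in> {s0 * r | r. True}" by blast
    next
      fix r x assume "x \<in> {s0 * r | r. True}"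
      then obtain r1 where "x = s0 * r1" by blast
      then have "r * x = s0 * (r * r1)" by (simp add: algebra_simps)
      then show "r * x \<in> {s0 * r | r. True}" by blast
    qed
    have "sums (prs a0 N) = {s0 * r | r. True}"
    proof
      show "sums (prs a0 N) \<subseteq> {s0 * r | r. True}"
      proof (rule sums_sub[OF sI], rule subsetI)
        fix x assume "x \<in> prs a0 N"
        then obtain a b where "x = a * b" "a \<in> a0" "b \<in> N" unfolding prs_def by blast
        then obtain r where "b * a = s0 * r" unfolding N_def by blast
        then have "x = s0 * r" using `x = a * b` by (simp add: mult.commute)
        then show "x \<in> {s0 * r | r. True}" by blast
      qed
    next
      have QN: "\<phi> ` Q \<subseteq> N"
      proof (clarsimp simp: N_def)
        fix \<beta> z assume "\<beta> \<in> Q" "z \<in> a0"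
        then obtain q where "q \<in> I'" "z = \<phi> q" using sub2 by auto
        then obtain \<gamma> where "\<beta> * q = s' * \<gamma>" using `\<beta> \<in> Q` unfolding Q_def by blast
        then have "\<phi> \<beta> * z = s0 * \<phi> \<gamma>" using `z = \<phi> q` s'(2) hom_mult[OF h] by metis
        then show "\<exists>r. \<phi> \<beta> * z = s0 * r" by blast
      qed
      have "s0 \<in> sums (prs a0 N)" using push_sums[OF h w(1) sub1 QN] ws s' by simp
      show "{s0 * r | r. True} \<subseteq> sums (prs a0 N)"
      proof (rule subsetI)
        fix x assume "x \<in> {s0 * r | r. True}"
        then obtain r where "x = s0 * r" by blast
        then have "x = r * s0" by (simp add: mult.commute)
        then show "x \<in> sums (prs a0 N)" using ideal_ml[OF sums_ideal[OF a0i] `s0 \<in> sums (prs a0 N)`] by simp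
      qed
    qed
    then have eqn: "ideal_mult a0 N = {s0 * r | r. True}" by (simp only: ideal_mult_eq[OF a0i])
    have "is_ideal N \<and> nonzerodivisor s0 \<and> ideal_mult a0 N = {s0 * r | r. True}"
      by (rule conjI[OF Ni conjI[OF s0(2) eqn]])
    then have "\<exists>J d. is_ideal J \<and> nonzerodivisor d \<and> ideal_mult a0 J = {d * r | r. True}"
      by (rule exI[of _ N, OF exI[of _ s0]])
    then show ?thesis unfolding invertible_ideal_def by (rule conjI[OF a0i])
  qed
  have p2: "prufer_ring TYPE('b)" unfolding prufer_ring_def
  proof (intro allI impI)
    fix I :: "'b set" assume "regular_ideal I \<and> fin_gen_ideal I"
    then have "regular_ideal I" "fin_gen_ideal I" by simp_all
    then show "invertible_ideal I" by (rule part2)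
  qed
  have p1: "\<forall>\<aa> \<bb> \<cc> :: 'b set. is_ideal \<aa> \<and> is_ideal \<bb> \<and> is_ideal \<cc> \<longrightarrow>
            ideal_mult \<aa> (\<bb> \<inter> \<cc>) = ideal_mult \<aa> \<bb> \<inter> ideal_mult \<aa> \<cc>"
  proof (intro allI impI)
    fix a b c :: "'b set" assume "is_ideal a \<and> is_ideal b \<and> is_ideal c"
    then have "is_ideal a" "is_ideal b" "is_ideal c" by simp_all
    then show "ideal_mult a (b \<inter> c) = ideal_mult a b \<inter> ideal_mult a c" by (rule part1)
  qed
  show ?thesis using p1 p2 by (rule conjI)
qed

end
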